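(* Let $\mathcal{H}$ be a real Hilbert space, $A:\mathcal{H}\rightrightarrows\mathcal{H}$ maximal monotone with $A^{-1}(0)\neq\emptyset$, $\theta>0$, $p\geq1$ an integer, and let $(x,\lambda):[0,+\infty)\to\mathcal{H}\times(0,+\infty)$ be a global solution of \[ \dot{x}(t)+x(t)-(I+\lambda(t)A)^{-1}x(t)=0,\qquad \lambda(t)\,\|(I+\lambda(t)A)^{-1}x(t)-x(t)\|^{p-1}=\theta, \] with $x(0)\in\{x:0\notin Ax\}$. Fix $z\in A^{-1}(0)$ and let $\mathcal{E}(t)=\frac12\|x(t)-z\|^2$. Then \[ \frac{d\mathcal{E}(t)}{dt}\leq-\|x(t)-(I+\lambda(t)A)^{-1}x(t)\|^2 . \]
   Context: $(I+\lambda A)^{-1}$ is the resolvent of $A$ of index $\lambda>0$; $A^{-1}(0)=\{x:0\in Ax\}$. *)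

theory Defs
  imports "HOL-Analysis.Analysis"
begin

definition monotone_op :: "('a::real_inner \<Rightarrow> 'a set) \<Rightarrow> bool" where
  "monotone_op A \<longleftrightarrow> (\<forall>x y u v. u \<in> A x \<longrightarrow> v \<in> A y \<longrightarrow> inner (x - y) (u - v) \<ge> 0)"

definition maximal_monotone :: "('a::real_inner \<Rightarrow> 'a set) \<Rightarrow> bool" where
  "maximal_monotone A \<longleftrightarrow> monotone_op A \<and>
     (\<forall>B. monotone_op B \<longrightarrow> (\<forall>x. A x \<subseteq> B x) \<longrightarrow> B = A)"

text \<open>Resolvent (I + lam A)^{-1} x: the unique y with x \<in> y + lam A y.
  It is single-valued and everywhere defined for maximal monotone A and lam > 0.\<close>
definition resolvent :: "('a::real_inner \<Rightarrow> 'a set) \<Rightarrow> real \<Rightarrow> 'a \<Rightarrow> 'a" where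
  "resolvent A lam x = (THE y. \<exists>u \<in> A y. x = y + lam *\<^sub>R u)"

definition zeros_op :: "('a::real_inner \<Rightarrow> 'a set) \<Rightarrow> 'a set" where
  "zeros_op A = {x. 0 \<in> A x}"

end

theory Submission
  imports Defs
begin

lemma ball_form:
  fixes y a b :: "'a::real_inner"
  shows "inner (y - a) (y + b) = (norm (y - (1/2) *\<^sub>R (a - b)))\<^sup>2 - (norm ((1/2) *\<^sub>R (a + b)))\<^sup>2"
  by (simp add: power2_norm_eq_inner inner_diff_left inner_diff_right inner_add_left inner_add_right
      inner_commute algebra_simps)

definition Q :: "'a::real_inner \<Rightarrow> 'a \<Rightarrow> real \<Rightarrow> 'a set" where
  "Q a b t = {y. inner (y - a) (y + b) \<le> t}"

lemma Q_closed: "closed (Q a b t)"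
  unfolding Q_def
  by (intro closed_Collect_le continuous_intros)

lemma Q_cball: "Q a b t = {y. (norm (y - (1/2) *\<^sub>R (a - b)))\<^sup>2 \<le> t + (norm ((1/2) *\<^sub>R (a + b)))\<^sup>2}"
  unfolding Q_def ball_form by auto

lemma Q_convex_bounded: "convex (Q a b t) \<and> bounded (Q a b t)"
proof (cases "t + (norm ((1/2) *\<^sub>R (a + b)))\<^sup>2 < 0")
  case True
  then have "Q a b t = {}" unfolding Q_cball
    by (auto intro: order.strict_trans1[OF _ True] simp del: norm_scaleR)
      (smt (verit) zero_le_power2)
  then show ?thesis by simp
next
  case False
  define r where "r = sqrt (t + (norm ((1/2) *\<^sub>R (a + b)))\<^sup>2)"
  have "Q a b t = cball ((1/2) *\<^sub>R (a - b)) r"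
    unfolding Q_cball r_def cball_def dist_norm
    using False
  proof (intro set_eqI iffI; simp del: norm_scaleR)
    fix y assume "(norm (y - (1/2) *\<^sub>R (a - b)))\<^sup>2 \<le> t + (norm ((1/2) *\<^sub>R (a + b)))\<^sup>2"
    then show "norm ((1/2) *\<^sub>R (a - b) - y) \<le> sqrt (t + (norm ((1/2) *\<^sub>R (a + b)))\<^sup>2)"
      by (simp add: real_le_rsqrt norm_minus_commute del: norm_scaleR)
  next
    fix y assume a: "norm ((1/2) *\<^sub>R (a - b) - y) \<le> sqrt (t + (norm ((1/2) *\<^sub>R (a + b)))\<^sup>2)"
    have "(norm ((1/2) *\<^sub>R (a - b) - y))\<^sup>2 \<le> (sqrt (t + (norm ((1/2) *\<^sub>R (a + b)))\<^sup>2))\<^sup>2"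
      by (rule power_mono[OF a]) simp
    then show "(norm (y - (1/2) *\<^sub>R (a - b)))\<^sup>2 \<le> t + (norm ((1/2) *\<^sub>R (a + b)))\<^sup>2"
      using False by (simp add: norm_minus_commute del: norm_scaleR)
  qed
  then show ?thesis by simp
qed

lemma parallelogram_mid:
  fixes y y' :: "'a::real_inner"
  shows "(norm (y - y'))\<^sup>2 = 2 * (norm y)\<^sup>2 + 2 * (norm y')\<^sup>2 - 4 * (norm ((1/2) *\<^sub>R y + (1/2) *\<^sub>R y'))\<^sup>2"
  by (simp add: power2_norm_eq_inner inner_diff_left inner_diff_right inner_add_left inner_add_right
      inner_commute algebra_simps)

lemma fip:
  fixes K :: "'i \<Rightarrow> 'a::{real_inner,complete_space} set"
  assumes cc: "\<And>i. i\<in>T \<Longrightarrow> closed (K i) \<and> convex (K i)"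
    and ib: "ib \<in> T" and bd: "bounded (K ib)"
    and ne: "\<And>F. finite F \<Longrightarrow> F \<subseteq> T \<Longrightarrow> (\<Inter>i\<in>insert ib F. K i) \<noteq> {}"
  shows "\<exists>p. \<forall>i\<in>T. p \<in> K i"
proof -
  define KF where "KF F = (\<Inter>i\<in>insert ib F. K i)" for F
  define fin where "fin = {F. finite F \<and> F \<subseteq> T}"
  define \<phi> where "\<phi> F = Inf ((\<lambda>y. (norm y)^2) ` KF F)" for F
  obtain M where M: "\<forall>y\<in>K ib. norm y \<le> M" using bd bounded_iff by blast
  have KF_sub: "KF F \<subseteq> K ib" for F unfolding KF_def by auto
  have KF_mono: "F \<subseteq> F' \<Longrightarrow> KF F' \<subseteq> KF F" for F F' unfolding KF_def by auto
  have KF_ne: "F \<in> fin \<Longrightarrow> KF F \<noteq> {}" for F unfolding KF_def fin_def using ne by auto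
  have KF_conv: "F \<in> fin \<Longrightarrow> convex (KF F)" for F
    unfolding KF_def fin_def using cc ib by (intro convex_INT) auto
  have bdd: "bdd_below ((\<lambda>y. (norm y)^2) ` S)" for S :: "'a set"
    by (rule bdd_belowI[of _ 0]) auto
  have \<phi>_le: "y \<in> KF F \<Longrightarrow> \<phi> F \<le> (norm y)^2" for F y
    unfolding \<phi>_def by (rule cInf_lower) (auto intro: bdd)
  have \<phi>_M: "F \<in> fin \<Longrightarrow> \<phi> F \<le> M^2" for F
  proof -
    assume "F \<in> fin"
    then obtain y where y: "y \<in> KF F" using KF_ne by blast
    then have "norm y \<le> M" using M KF_sub by blast
    then have "(norm y)^2 \<le> M^2" by (rule power_mono) simp
    then show ?thesis using \<phi>_le[OF y] by linarith
  qed
  have \<phi>_mono: "F \<in> fin \<Longrightarrow> F' \<in> fin \<Longrightarrow> F \<subseteq> F' \<Longrightarrow> \<phi> F \<le> \<phi> F'" for F F'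
    unfolding \<phi>_def
  proof (rule cInf_superset_mono)
    assume "F \<in> fin" "F' \<in> fin" "F \<subseteq> F'"
    then show "(\<lambda>y. (norm y)\<^sup>2) ` KF F' \<noteq> {}" using KF_ne by blast
    show "bdd_below ((\<lambda>y. (norm y)\<^sup>2) ` KF F)" by (rule bdd)
    show "(\<lambda>y. (norm y)\<^sup>2) ` KF F' \<subseteq> (\<lambda>y. (norm y)\<^sup>2) ` KF F"
      using KF_mono[OF \<open>F \<subseteq> F'\<close>] by (rule image_mono)
  qed
  have \<phi>_approx: "F \<in> fin \<Longrightarrow> e > 0 \<Longrightarrow> \<exists>y\<in>KF F. (norm y)^2 < \<phi> F + e" for F e
  proof -
    assume F: "F \<in> fin" and e: "e > 0"
    have "Inf ((\<lambda>y. (norm y)^2) ` KF F) < \<phi> F + e" unfolding \<phi>_def using e by simp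
    then show ?thesis using cInf_less_iff[of "(\<lambda>y. (norm y)^2) ` KF F"] KF_ne[OF F] bdd by auto
  qed
  define s where "s = (SUP F\<in>fin. \<phi> F)"
  have fin_ne: "{} \<in> fin" unfolding fin_def by auto
  have bddA: "bdd_above (\<phi> ` fin)" using \<phi>_M by (intro bdd_aboveI[of _ "M^2"]) auto
  have \<phi>_s: "F\<in>fin \<Longrightarrow> \<phi> F \<le> s" for F unfolding s_def using bddA by (rule cSUP_upper2) auto
  have "\<forall>n. \<exists>F\<in>fin. s - 1/Suc n < \<phi> F"
  proof
    fix n
    have "s - 1/Suc n < s" by simp
    then show "\<exists>F\<in>fin. s - 1/Suc n < \<phi> F"
      unfolding s_def using less_cSUP_iff[of fin \<phi> "s - 1/Suc n"] fin_ne bddA s_def by blast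
  qed
  then obtain Fc where Fc: "\<And>n. Fc n \<in> fin \<and> s - 1/Suc n < \<phi> (Fc n)" by metis
  define Fn where "Fn n = \<Union>(Fc ` {..n})" for n
  have Fn_fin: "Fn n \<in> fin" for n using Fc unfolding Fn_def fin_def by auto
  have Fn_mono: "n \<le> m \<Longrightarrow> Fn n \<subseteq> Fn m" for n m unfolding Fn_def by (auto intro: order_trans)
  have Fn_phi: "s - 1/Suc n < \<phi> (Fn n)" for n
  proof -
    have "\<phi> (Fc n) \<le> \<phi> (Fn n)" using Fc Fn_fin by (intro \<phi>_mono) (auto simp: Fn_def)
    then show ?thesis using Fc[of n] by linarith
  qed
  have est: "(norm (y - y'))^2 \<le> 8*e"
    if F: "F \<in> fin" and Fs: "s - e < \<phi> F" and y: "y \<in> KF F" and y': "y' \<in> KF F"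
      and ny: "(norm y)^2 \<le> s + e" and ny': "(norm y')^2 \<le> s + e" for F e y y'
  proof -
    have "(1/2) *\<^sub>R y + (1/2) *\<^sub>R y' \<in> KF F"
      using KF_conv[OF F] y y' unfolding convex_def by auto
    then have "\<phi> F \<le> (norm ((1/2) *\<^sub>R y + (1/2) *\<^sub>R y'))\<^sup>2" by (rule \<phi>_le)
    then show ?thesis using parallelogram_mid[of y y'] Fs ny ny' by linarith
  qed
  have "\<forall>n. \<exists>y\<in>KF (Fn n). (norm y)^2 < s + 1/Suc n"
  proof
    fix n
    obtain y where "y\<in>KF (Fn n)" "(norm y)^2 < \<phi> (Fn n) + 1/Suc n"
      using \<phi>_approx[OF Fn_fin, of "1/Suc n" n] by auto
    then show "\<exists>y\<in>KF (Fn n). (norm y)^2 < s + 1/Suc n" using \<phi>_s[OF Fn_fin, of n] by force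
  qed
  then obtain yn where yn: "\<And>n. yn n \<in> KF (Fn n) \<and> (norm (yn n))^2 < s + 1/Suc n" by metis
  have ydist: "(norm (yn n - yn m))^2 \<le> 8/Suc n" if nm: "n \<le> m" for n m
  proof -
    have "yn m \<in> KF (Fn n)" using yn[of m] KF_mono[OF Fn_mono[OF nm]] by auto
    moreover have "1/real (Suc m) \<le> 1/Suc n" using nm by (simp add: frac_le)
    ultimately show ?thesis
      using est[where F="Fn n" and e="1/Suc n" and y="yn n" and y'="yn m", OF Fn_fin Fn_phi] yn[of n] yn[of m] by auto
  qed
  have "Cauchy yn"
  proof (rule metric_CauchyI)
    fix e :: real assume e: "0 < e"
    then have "0 < e^2/8" by simp
    then obtain N where N: "inverse (real (Suc N)) < e^2/8" using reals_Archimedean by blast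
    then have N': "8 / real (Suc N) < e^2" by (simp add: field_simps)
    show "\<exists>M. \<forall>m\<ge>M. \<forall>n\<ge>M. dist (yn m) (yn n) < e"
    proof (intro exI allI impI)
      fix m n assume m: "m \<ge> N" and n: "n \<ge> N"
      have "(norm (yn m - yn n))^2 \<le> 8/Suc N"
      proof (cases "m \<le> n")
        case True
        then have "(norm (yn m - yn n))^2 \<le> 8/Suc m" by (rule ydist)
        also have "\<dots> \<le> 8/Suc N" using m by (simp add: frac_le)
        finally show ?thesis .
      next
        case False
        then have "(norm (yn n - yn m))^2 \<le> 8/Suc n" by (intro ydist) simp
        also have "\<dots> \<le> 8/Suc N" using n by (simp add: frac_le)
        finally show ?thesis by (simp add: norm_minus_commute)
      qed
      then have "(norm (yn m - yn n))^2 < e^2" using N' by linarith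
      then show "dist (yn m) (yn n) < e" using e by (simp add: dist_norm power2_less_imp_less)
    qed
  qed
  then obtain p where p: "yn \<longlonglongrightarrow> p" using Cauchy_convergent_iff convergent_def by blast
  have lim8: "(\<lambda>n. sqrt (8 / real (Suc n))) \<longlonglongrightarrow> 0"
  proof -
    have "(\<lambda>n. 8 / real n) \<longlonglongrightarrow> 0" by (rule lim_const_over_n)
    then have "(\<lambda>n. 8 / real (Suc n)) \<longlonglongrightarrow> 0" by (rule LIMSEQ_Suc)
    then show ?thesis using tendsto_real_sqrt by fastforce
  qed
  show ?thesis
  proof (intro exI ballI)
    fix i assume i: "i \<in> T"
    have "\<forall>n. \<exists>y\<in>KF (insert i (Fn n)). (norm y)^2 < s + 1/Suc n"
    proof
      fix n
      have F': "insert i (Fn n) \<in> fin" using Fn_fin i unfolding fin_def by auto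
      obtain y where "y\<in>KF (insert i (Fn n))" "(norm y)^2 < \<phi> (insert i (Fn n)) + 1/Suc n"
        using \<phi>_approx[OF F', of "1/Suc n"] by auto
      then show "\<exists>y\<in>KF (insert i (Fn n)). (norm y)^2 < s + 1/Suc n" using \<phi>_s[OF F'] by force
    qed
    then obtain zn where zn: "\<And>n. zn n \<in> KF (insert i (Fn n)) \<and> (norm (zn n))^2 < s + 1/Suc n"
      by metis
    have zK: "zn n \<in> K i" for n using zn[of n] unfolding KF_def by auto
    have zF: "zn n \<in> KF (Fn n)" for n using zn[of n] KF_mono[of "Fn n" "insert i (Fn n)"] by auto
    have "norm (zn n - yn n) \<le> sqrt (8 / real (Suc n))" for n
    proof -
      have "(norm (zn n - yn n))^2 \<le> 8 * (1/Suc n)"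
        using est[where F="Fn n" and e="1/Suc n" and y="zn n" and y'="yn n", OF Fn_fin Fn_phi zF] yn[of n] zn[of n] by auto
      then show ?thesis by (simp add: real_le_rsqrt)
    qed
    then have "(\<lambda>n. zn n - yn n) \<longlonglongrightarrow> 0"
      by (intro Lim_null_comparison[OF _ lim8]) auto
    then have "(\<lambda>n. (zn n - yn n) + yn n) \<longlonglongrightarrow> 0 + p" by (intro tendsto_add p)
    then have "zn \<longlonglongrightarrow> p" by simp
    then show "p \<in> K i" using closed_sequentially[of "K i" zn p] cc[OF i] zK by auto
  qed
qed

lemma alg_final:
  fixes A B :: "'w \<Rightarrow> 'a::real_inner"
  assumes fin: "finite W" and u0: "\<And>w. w\<in>W \<Longrightarrow> u w \<ge> 0" and u1: "sum u W = 1"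
   and zero: "(\<Sum>w\<in>W. u w *\<^sub>R (2 *\<^sub>R y + B w - A w)) = 0"
   and mon: "\<And>v w. v\<in>W \<Longrightarrow> w\<in>W \<Longrightarrow> inner (A v - A w) (B v - B w) \<ge> 0"
   and act: "\<And>w. w\<in>W \<Longrightarrow> inner (y - A w) (y + B w) = m"
  shows "m \<le> 0"
proof -
  define ab where "ab = (\<Sum>w\<in>W. u w *\<^sub>R A w)"
  define bb where "bb = (\<Sum>w\<in>W. u w *\<^sub>R B w)"
  define S where "S = (\<Sum>w\<in>W. u w * inner (A w) (B w))"
  have "(\<Sum>w\<in>W. u w *\<^sub>R (2 *\<^sub>R y + B w - A w)) = (\<Sum>w\<in>W. u w *\<^sub>R (2 *\<^sub>R y)) + bb - ab"
    unfolding ab_def bb_def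
    by (simp add: scaleR_right_diff_distrib scaleR_right_distrib sum.distrib sum_subtractf)
  also have "(\<Sum>w\<in>W. u w *\<^sub>R (2 *\<^sub>R y)) = 2 *\<^sub>R y"
    using u1 by (simp add: scaleR_sum_left[symmetric] sum_distrib_right[symmetric])
  finally have y2: "2 *\<^sub>R y = ab - bb" using zero by (simp add: algebra_simps)
  have "m = (\<Sum>w\<in>W. u w * inner (y - A w) (y + B w))"
    using act u1 by (simp add: sum_distrib_right[symmetric])
  also have "\<dots> = (\<Sum>w\<in>W. u w * inner y y + u w * inner y (B w) - u w * inner (A w) y - u w * inner (A w) (B w))"
    by (intro sum.cong) (auto simp: inner_diff_left inner_add_right algebra_simps)
  also have "\<dots> = inner y y + inner y bb - inner ab y - S"
    unfolding ab_def bb_def S_def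
    by (simp add: sum_subtractf sum.distrib sum_distrib_right[symmetric] u1 inner_sum_left inner_sum_right)
  finally have m: "m = inner y y + inner y bb - inner ab y - S" .
  have "0 \<le> (\<Sum>v\<in>W. \<Sum>w\<in>W. u v * u w * inner (A v - A w) (B v - B w))"
    using u0 mon by (intro sum_nonneg mult_nonneg_nonneg) auto
  also have "\<dots> = (\<Sum>v\<in>W. \<Sum>w\<in>W. (u w * (u v * inner (A v) (B v)) + u v * (u w * inner (A w) (B w)))
        - (inner (u v *\<^sub>R A v) (u w *\<^sub>R B w) + inner (u w *\<^sub>R A w) (u v *\<^sub>R B v)))"
    by (intro sum.cong) (auto simp: inner_diff_left inner_diff_right algebra_simps)
  finally have c1: "0 \<le> (\<Sum>v\<in>W. \<Sum>w\<in>W. (u w * (u v * inner (A v) (B v)) + u v * (u w * inner (A w) (B w)))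
        - (inner (u v *\<^sub>R A v) (u w *\<^sub>R B w) + inner (u w *\<^sub>R A w) (u v *\<^sub>R B v)))" .
  have sw: "(\<Sum>v\<in>W. \<Sum>w\<in>W. u w * (u v * inner (A w) (B v))) = (\<Sum>v\<in>W. \<Sum>w\<in>W. u w * (u v * inner (A v) (B w)))"
    by (subst sum.swap) (simp add: algebra_simps)
  have c2: "(\<Sum>v\<in>W. \<Sum>w\<in>W. (u w * (u v * inner (A v) (B v)) + u v * (u w * inner (A w) (B w)))
        - (inner (u v *\<^sub>R A v) (u w *\<^sub>R B w) + inner (u w *\<^sub>R A w) (u v *\<^sub>R B v))) = 2 * S - 2 * inner ab bb"
    unfolding ab_def bb_def S_def using sw
    by (simp add: sum_subtractf sum.distrib sum_distrib_right[symmetric] sum_distrib_left[symmetric]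
        u1 inner_sum_left inner_sum_right inner_commute)
  have Sge: "inner ab bb \<le> S" using c1 c2 by simp
  have "4 * inner y y = inner (ab - bb) (ab - bb)"
    using y2 by (metis (no_types, lifting) inner_scaleR_left inner_scaleR_right mult.assoc
        mult_2 numeral_Bit0 one_add_one)
  moreover have "inner (ab + bb) (ab + bb) \<ge> 0" by simp
  moreover have "inner y bb - inner ab y = - 2 * inner y y"
  proof -
    have "inner y bb - inner ab y = - inner y (ab - bb)" by (simp add: inner_diff_right inner_commute)
    also have "\<dots> = - inner y (2 *\<^sub>R y)" using y2 by simp
    finally show ?thesis by simp
  qed
  ultimately show ?thesis using m Sge
    by (simp add: inner_diff_left inner_diff_right inner_add_left inner_add_right inner_commute)
qed

lemma min_norm_ineq:
  fixes q g :: "'a::real_inner"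
  assumes C: "convex C" and q: "q \<in> C" and g: "g \<in> C" and mn: "\<And>c. c \<in> C \<Longrightarrow> norm q \<le> norm c"
  shows "inner q g \<ge> (norm q)\<^sup>2"
proof (rule ccontr)
  assume "\<not> ?thesis"
  then have d: "inner q (g - q) < 0" by (simp add: inner_diff_right power2_norm_eq_inner)
  define d where "d = inner q (g - q)"
  define r where "r = (norm (g - q))\<^sup>2"
  have r: "r > 0" using d unfolding r_def by (cases "g = q") auto
  define t where "t = min 1 (- d / r)"
  have t0: "t > 0" using d r unfolding t_def d_def by (simp add: field_simps)
  have t1: "t \<le> 1" unfolding t_def by simp
  have tr: "t * r \<le> - d" using r unfolding t_def by (simp add: min_def field_simps)
  have "(1 - t) *\<^sub>R q + t *\<^sub>R g \<in> C" using C q g t0 t1 unfolding convex_def by auto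
  moreover have "(1 - t) *\<^sub>R q + t *\<^sub>R g = q + t *\<^sub>R (g - q)" by (simp add: algebra_simps)
  ultimately have "norm q \<le> norm (q + t *\<^sub>R (g - q))" using mn by metis
  then have "(norm q)\<^sup>2 \<le> (norm (q + t *\<^sub>R (g - q)))\<^sup>2" by (simp add: power_mono)
  also have "\<dots> = (norm q)\<^sup>2 + t * (2 * d + t * r)"
  proof -
    have "(norm (q + t *\<^sub>R (g - q)))\<^sup>2 = inner (q + t *\<^sub>R (g - q)) (q + t *\<^sub>R (g - q))"
      by (rule power2_norm_eq_inner)
    also have "\<dots> = inner q q + 2 * t * inner q (g - q) + t * t * inner (g - q) (g - q)"
      by (simp add: inner_add_left inner_add_right inner_commute ring_distribs)
    finally show ?thesis unfolding d_def r_def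
      by (simp add: power2_norm_eq_inner ring_distribs)
  qed
  finally have "0 \<le> t * (2 * d + t * r)" by simp
  then have "0 \<le> 2 * d + t * r" using t0 by (simp add: zero_le_mult_iff)
  then show False using tr d unfolding d_def by linarith
qed

lemma expand_shift:
  fixes y q a b :: "'a::real_inner"
  shows "inner (y - t *\<^sub>R q - a) (y - t *\<^sub>R q + b) =
     inner (y - a) (y + b) - t * inner q (2 *\<^sub>R y + b - a) + t\<^sup>2 * (norm q)\<^sup>2"
proof -
  have e: "y - t *\<^sub>R q - a = (y - a) - t *\<^sub>R q" "y - t *\<^sub>R q + b = (y + b) - t *\<^sub>R q"
    by (simp_all add: algebra_simps)
  have nq: "inner q q = norm q * norm q" by (metis power2_eq_square power2_norm_eq_inner)
  show ?thesis unfolding e using nq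
    by (simp add: power2_norm_eq_inner power2_eq_square inner_diff_left inner_diff_right inner_add_left
      inner_add_right inner_commute ring_distribs)
qed

lemma finite_step:
  fixes a b :: "'i \<Rightarrow> 'a::{real_inner,complete_space}"
  assumes fin: "finite I" and mon: "\<And>i j. i\<in>I \<Longrightarrow> j\<in>I \<Longrightarrow> inner (a i - a j) (b i - b j) \<ge> 0"
  shows "\<exists>y. \<forall>i\<in>I. inner (y - a i) (y + b i) \<le> 0"
proof (cases "I = {}")
  case True then show ?thesis by simp
next
  case Ine: False
  define f where "f i y = inner (y - a i) (y + b i)" for i y
  define h where "h y = Max ((\<lambda>i. f i y) ` I)" for y
  have f_le_h: "i \<in> I \<Longrightarrow> f i y \<le> h y" for i y unfolding h_def using fin by auto
  obtain i0 where i0: "i0 \<in> I" using Ine by blast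
  define R where "R = (norm ((1/2) *\<^sub>R (a i0 + b i0)))\<^sup>2"
  have hlow: "- R \<le> h y" for y
  proof -
    have "- R \<le> f i0 y" unfolding f_def R_def ball_form by simp
    then show ?thesis using f_le_h[OF i0, of y] by linarith
  qed
  define m where "m = Inf (range h)"
  have bddh: "bdd_below (range h)" using hlow by (intro bdd_belowI[of _ "-R"]) auto
  have m_le: "m \<le> h y" for y unfolding m_def using bddh by (intro cInf_lower) auto
  define L where "L n = (\<Inter>i\<in>I. Q (a i) (b i) (m + 1/Suc n))" for n :: nat
  have memL: "y \<in> L n \<longleftrightarrow> (\<forall>i\<in>I. f i y \<le> m + 1/Suc n)" for y n
    unfolding L_def Q_def f_def by auto
  have "\<exists>p. \<forall>n\<in>UNIV. p \<in> L n"
  proof (rule fip)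
    fix n :: nat
    show "closed (L n) \<and> convex (L n)" unfolding L_def
      using Q_closed Q_convex_bounded by (intro conjI closed_INT convex_INT) blast+
  next
    show "(0::nat) \<in> UNIV" by simp
    show "bounded (L 0)" unfolding L_def using Q_convex_bounded i0
      by (meson INT_lower bounded_subset)
  next
    fix F :: "nat set" assume F: "finite F"
    define N where "N = Max (insert 0 F)"
    have "m < m + 1/Suc N" by simp
    then have "\<exists>y. h y < m + 1/Suc N"
      unfolding m_def using cInf_less_iff[of "range h" "m + 1/Suc N"] bddh m_def by auto
    then obtain y where y: "h y < m + 1/Suc N" by blast
    have "y \<in> L k" if k: "k \<in> insert 0 F" for k
    proof -
      have "k \<le> N" unfolding N_def using F k by simp
      then have "1/real (Suc N) \<le> 1/Suc k" by (simp add: frac_le)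
      show ?thesis unfolding memL
      proof (intro ballI)
        fix i assume "i \<in> I"
        then have "f i y \<le> h y" by (rule f_le_h)
        then show "f i y \<le> m + 1/Suc k" using y \<open>1/real (Suc N) \<le> 1/Suc k\<close> by linarith
      qed
    qed
    then show "(\<Inter>i\<in>insert 0 F. L i) \<noteq> {}" by blast
  qed
  then obtain p where p: "\<And>n. p \<in> L n" by blast
  have hp: "h p \<le> m"
  proof (rule ccontr)
    assume "\<not> h p \<le> m"
    then have "0 < h p - m" by simp
    then obtain n where n: "inverse (real (Suc n)) < h p - m" using reals_Archimedean by blast
    have "h p \<in> (\<lambda>i. f i p) ` I" unfolding h_def using fin Ine by (intro Max_in) auto
    then obtain i where i: "i \<in> I" "h p = f i p" by auto
    then have "f i p \<le> m + 1/Suc n" using p[of n] memL by auto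
    then show False using n i by (simp add: inverse_eq_divide)
  qed
  have hmin: "h p \<le> h y" for y using hp m_le[of y] by linarith
  define mm where "mm = h p"
  define J where "J = {i\<in>I. f i p = mm}"
  have Jsub: "J \<subseteq> I" unfolding J_def by auto
  have finJ: "finite J" using fin Jsub finite_subset by blast
  have Jne: "J \<noteq> {}"
  proof -
    have "h p \<in> (\<lambda>i. f i p) ` I" unfolding h_def using fin Ine by (intro Max_in) auto
    then show ?thesis unfolding J_def mm_def by auto
  qed
  define g where "g i = 2 *\<^sub>R p + b i - a i" for i
  define C where "C = convex hull (g ` J)"
  have zeroC: "0 \<in> C"
  proof (rule ccontr)
    assume z: "0 \<notin> C"
    have cpt: "compact C" unfolding C_def using finJ by (intro finite_imp_compact_convex_hull) auto
    have Cne: "C \<noteq> {}" unfolding C_def using Jne by simp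
    obtain q where q: "q \<in> C" "\<And>c. c \<in> C \<Longrightarrow> norm q \<le> norm c"
      using continuous_attains_inf[OF cpt Cne, of norm] by (auto intro: continuous_intros)
    have qne: "q \<noteq> 0" using q z by auto
    then have nq: "(norm q)\<^sup>2 > 0" by simp
    have qg: "inner q (g i) \<ge> (norm q)\<^sup>2" if i: "i \<in> J" for i
    proof -
      have gi: "g i \<in> C" unfolding C_def by (rule hull_inc) (use i in auto)
      have "convex C" unfolding C_def by (rule convex_convex_hull)
      then show ?thesis using min_norm_ineq[OF _ q(1) gi q(2)] by blast
    qed
    have ev: "eventually (\<lambda>t. f i (p - t *\<^sub>R q) < mm) (at_right 0)" if i: "i \<in> I" for i
    proof (cases "i \<in> J")
      case True
      show ?thesis
      proof (rule eventually_at_rightI[of 0 1])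
        fix t :: real assume t: "t \<in> {0<..<1}"
        have "f i (p - t *\<^sub>R q) = mm - t * inner q (g i) + t\<^sup>2 * (norm q)\<^sup>2"
          unfolding f_def expand_shift using True unfolding J_def f_def g_def by simp
        also have "\<dots> \<le> mm - t * (norm q)\<^sup>2 + t\<^sup>2 * (norm q)\<^sup>2"
          using qg[OF True] t by (simp add: mult_left_mono)
        also have "\<dots> < mm"
        proof -
          have "t * t < t * 1" using t by (intro mult_strict_left_mono) auto
          then have "(t * t) * (norm q)\<^sup>2 < t * (norm q)\<^sup>2"
            using mult_strict_right_mono[OF _ nq] by simp
          then have "t\<^sup>2 * (norm q)\<^sup>2 < t * (norm q)\<^sup>2" by (simp add: power2_eq_square)
          then show ?thesis by linarith
        qed
        finally show "f i (p - t *\<^sub>R q) < mm" .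
      qed simp
    next
      case False
      then have lt: "f i p < mm" using f_le_h[OF i, of p] i unfolding J_def mm_def by auto
      have "((\<lambda>t. f i p - t * inner q (g i) + t\<^sup>2 * (norm q)\<^sup>2) \<longlongrightarrow>
              f i p - 0 * inner q (g i) + 0\<^sup>2 * (norm q)\<^sup>2) (at_right 0)"
        by (intro tendsto_intros)
      then have "((\<lambda>t. f i (p - t *\<^sub>R q)) \<longlongrightarrow> f i p) (at_right 0)"
        unfolding f_def expand_shift g_def by simp
      then show ?thesis using lt by (rule order_tendstoD(2))
    qed
    have "eventually (\<lambda>t. \<forall>i\<in>I. f i (p - t *\<^sub>R q) < mm) (at_right 0)"
      using ev fin by (intro eventually_ball_finite) auto
    then obtain t :: real where t: "\<forall>i\<in>I. f i (p - t *\<^sub>R q) < mm"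
      using eventually_happens'[OF trivial_limit_at_right_real] by blast
    have "h (p - t *\<^sub>R q) < mm" unfolding h_def using fin Ine t by simp
    then show False using hmin[of "p - t *\<^sub>R q"] unfolding mm_def by simp
  qed
  define W where "W = g ` J"
  have finW: "finite W" unfolding W_def using finJ by simp
  obtain u where u: "\<forall>w\<in>W. 0 \<le> u w" "sum u W = 1" "(\<Sum>w\<in>W. u w *\<^sub>R w) = 0"
    using zeroC unfolding C_def W_def[symmetric] convex_hull_finite[OF finW] by auto
  define \<iota> where "\<iota> = inv_into J g"
  have \<iota>J: "w \<in> W \<Longrightarrow> \<iota> w \<in> J" for w unfolding \<iota>_def W_def by (rule inv_into_into)
  have g\<iota>: "w \<in> W \<Longrightarrow> g (\<iota> w) = w" for w unfolding \<iota>_def W_def by (rule f_inv_into_f)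
  have "mm \<le> 0"
  proof (rule alg_final[where W=W and u=u and A="\<lambda>w. a (\<iota> w)" and B="\<lambda>w. b (\<iota> w)" and y=p])
    show "finite W" by (rule finW)
    show "\<And>w. w \<in> W \<Longrightarrow> 0 \<le> u w" using u by auto
    show "sum u W = 1" by (rule u(2))
    have "(\<Sum>w\<in>W. u w *\<^sub>R (2 *\<^sub>R p + b (\<iota> w) - a (\<iota> w))) = (\<Sum>w\<in>W. u w *\<^sub>R w)"
    proof (intro sum.cong refl)
      fix w assume w: "w \<in> W"
      have "2 *\<^sub>R p + b (\<iota> w) - a (\<iota> w) = w" using g\<iota>[OF w] unfolding g_def by simp
      then show "u w *\<^sub>R (2 *\<^sub>R p + b (\<iota> w) - a (\<iota> w)) = u w *\<^sub>R w" by simp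
    qed
    then show "(\<Sum>w\<in>W. u w *\<^sub>R (2 *\<^sub>R p + b (\<iota> w) - a (\<iota> w))) = 0" using u(3) by simp
    show "\<And>v w. v \<in> W \<Longrightarrow> w \<in> W \<Longrightarrow> 0 \<le> inner (a (\<iota> v) - a (\<iota> w)) (b (\<iota> v) - b (\<iota> w))"
      using mon \<iota>J Jsub by blast
    show "\<And>w. w \<in> W \<Longrightarrow> inner (p - a (\<iota> w)) (p + b (\<iota> w)) = mm"
      using \<iota>J unfolding J_def f_def by auto
  qed
  show ?thesis
  proof (intro exI ballI)
    fix i assume "i \<in> I"
    then have "f i p \<le> h p" by (rule f_le_h)
    then show "inner (p - a i) (p + b i) \<le> 0" using \<open>mm \<le> 0\<close> unfolding f_def mm_def by linarith
  qed
qed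

lemma minty:
  fixes A :: "'a::{real_inner,complete_space} \<Rightarrow> 'a set"
  assumes mm: "maximal_monotone A" and lam: "lam > 0" and v0: "v0 \<in> A a0"
  shows "\<exists>y. \<exists>u\<in>A y. w = y + lam *\<^sub>R u"
proof -
  have monA: "monotone_op A" using mm unfolding maximal_monotone_def by simp
  have monAI: "\<And>x y u v. u\<in>A x \<Longrightarrow> v \<in> A y \<Longrightarrow> 0 \<le> inner (x - y) (u - v)"
    using monA unfolding monotone_op_def by blast
  have maxA: "\<And>B. monotone_op B \<Longrightarrow> (\<forall>x. A x \<subseteq> B x) \<Longrightarrow> B = A"
    using mm unfolding maximal_monotone_def by blast
  define T where "T = {(a,v). v \<in> A a}"
  define K where "K = (\<lambda>(a,v). Q a (lam *\<^sub>R v - w) 0)"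
  have "\<exists>y. \<forall>i\<in>T. y \<in> K i"
  proof (rule fip[where ib="(a0,v0)"])
    fix i assume "i \<in> T"
    show "closed (K i) \<and> convex (K i)"
      using Q_closed Q_convex_bounded unfolding K_def by (cases i) (simp only: prod.case, blast)
  next
    show "(a0, v0) \<in> T" using v0 unfolding T_def by simp
    show "bounded (K (a0, v0))" using Q_convex_bounded unfolding K_def by (simp only: prod.case, blast)
  next
    fix F assume F: "finite F" "F \<subseteq> T"
    have "\<exists>y. \<forall>i\<in>insert (a0,v0) F. inner (y - fst i) (y + (lam *\<^sub>R snd i - w)) \<le> 0"
    proof (rule finite_step)
      show "finite (insert (a0, v0) F)" using F by simp
      fix i j assume i: "i \<in> insert (a0, v0) F" and j: "j \<in> insert (a0, v0) F"
      have "snd i \<in> A (fst i)" "snd j \<in> A (fst j)" using i j F v0 unfolding T_def by auto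
      then have "0 \<le> inner (fst i - fst j) (snd i - snd j)" by (rule monAI)
      moreover have "inner (fst i - fst j) ((lam *\<^sub>R snd i - w) - (lam *\<^sub>R snd j - w))
          = lam * inner (fst i - fst j) (snd i - snd j)"
        by (simp add: inner_diff_right right_diff_distrib)
      ultimately show "0 \<le> inner (fst i - fst j) ((lam *\<^sub>R snd i - w) - (lam *\<^sub>R snd j - w))"
        using lam by simp
    qed
    then obtain y where "\<forall>i\<in>insert (a0,v0) F. inner (y - fst i) (y + (lam *\<^sub>R snd i - w)) \<le> 0"
      by blast
    then have "y \<in> (\<Inter>i\<in>insert (a0, v0) F. K i)" unfolding K_def Q_def by auto
    then show "(\<Inter>i\<in>insert (a0, v0) F. K i) \<noteq> {}" by blast
  qed
  then obtain y where y: "\<And>a v. v \<in> A a \<Longrightarrow> inner (y - a) (y + (lam *\<^sub>R v - w)) \<le> 0"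
    unfolding T_def K_def Q_def by auto
  define u where "u = (1/lam) *\<^sub>R (w - y)"
  have rel: "inner (y - a) (u - v) \<ge> 0" if v: "v \<in> A a" for a v
  proof -
    have "u - v = (- (1/lam)) *\<^sub>R (y + (lam *\<^sub>R v - w))"
      unfolding u_def using lam by (simp add: algebra_simps)
    then have "inner (y - a) (u - v) = (- (1/lam)) * inner (y - a) (y + (lam *\<^sub>R v - w))" by simp
    moreover have "(- (1/lam)) * inner (y - a) (y + (lam *\<^sub>R v - w)) \<ge> 0"
      using y[OF v] lam by (simp add: divide_nonpos_pos)
    ultimately show ?thesis by simp
  qed
  define B where "B x = (if x = y then insert u (A x) else A x)" for x
  have monB: "monotone_op B"
    unfolding monotone_op_def
  proof (intro allI impI)
    fix x1 x2 u1 u2 assume u1: "u1 \<in> B x1" and u2: "u2 \<in> B x2"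
    consider "x1 = y \<and> u1 = u" | "u1 \<in> A x1" using u1 unfolding B_def by (auto split: if_splits)
    then show "0 \<le> inner (x1 - x2) (u1 - u2)"
    proof cases
      case 1
      consider "x2 = y \<and> u2 = u" | "u2 \<in> A x2" using u2 unfolding B_def by (auto split: if_splits)
      then show ?thesis
      proof cases
        case 2 then show ?thesis using 1 rel[OF 2] by simp
      qed (use 1 in simp)
    next
      case a1: 2
      consider "x2 = y \<and> u2 = u" | "u2 \<in> A x2" using u2 unfolding B_def by (auto split: if_splits)
      then show ?thesis
      proof cases
        case 1
        have e: "x1 - y = - (y - x1)" "u1 - u = - (u - u1)" by simp_all
        have "inner (x1 - x2) (u1 - u2) = inner (y - x1) (u - u1)" using 1
          by (simp only: e inner_minus_left inner_minus_right minus_minus)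
        then show ?thesis using rel[OF a1] by simp
      next
        case 2 show ?thesis using monAI[OF a1 2] .
      qed
    qed
  qed
  have sub: "\<forall>x. A x \<subseteq> B x" unfolding B_def by auto
  have BA: "B = A" by (rule maxA[OF monB sub])
  have "u \<in> B y" unfolding B_def by simp
  then have "u \<in> A y" unfolding BA .
  moreover have "w = y + lam *\<^sub>R u" unfolding u_def using lam by simp
  ultimately show ?thesis by blast
qed

lemma resolvent_prop:
  fixes A :: "'a::{real_inner,complete_space} \<Rightarrow> 'a set"
  assumes mm: "maximal_monotone A" and lam: "lam > 0" and v0: "v0 \<in> A a0"
  shows "\<exists>u\<in>A (resolvent A lam x). x = resolvent A lam x + lam *\<^sub>R u"
  unfolding resolvent_def
proof (rule theI')
  have monA: "monotone_op A" using mm unfolding maximal_monotone_def by simp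
  show "\<exists>!y. \<exists>u\<in>A y. x = y + lam *\<^sub>R u"
  proof (rule ex_ex1I)
    show "\<exists>y. \<exists>u\<in>A y. x = y + lam *\<^sub>R u" using minty[OF mm lam v0] by blast
  next
    fix y1 y2 assume "\<exists>u\<in>A y1. x = y1 + lam *\<^sub>R u" "\<exists>u\<in>A y2. x = y2 + lam *\<^sub>R u"
    then obtain u1 u2 where u: "u1 \<in> A y1" "x = y1 + lam *\<^sub>R u1" "u2 \<in> A y2" "x = y2 + lam *\<^sub>R u2"
      by blast
    have m: "0 \<le> inner (y1 - y2) (u1 - u2)" using monA u unfolding monotone_op_def by blast
    have "y1 - y2 = lam *\<^sub>R (u2 - u1)" using u by (simp add: algebra_simps)
    then have "inner (y1 - y2) (y1 - y2) = inner (y1 - y2) (lam *\<^sub>R (u2 - u1))" by simp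
    also have "\<dots> = - lam * inner (y1 - y2) (u1 - u2)"
      by (simp add: inner_diff_right algebra_simps)
    also have "\<dots> \<le> 0" using m lam by (simp add: mult_nonneg_nonneg)
    finally have "inner (y1 - y2) (y1 - y2) \<le> 0" .
    then have "inner (y1 - y2) (y1 - y2) = 0" using inner_ge_zero[of "y1 - y2"] by linarith
    then show "y1 = y2" by simp
  qed
qed

theorem lemma3p1:
  fixes A :: "'a::{real_inner, complete_space} \<Rightarrow> 'a set"
    and x x' :: "real \<Rightarrow> 'a" and lam :: "real \<Rightarrow> real"
    and \<theta> :: real and p :: nat and z :: 'a
  assumes mm: "maximal_monotone A"
    and nz: "zeros_op A \<noteq> {}"
    and th: "\<theta> > 0"
    and p: "p \<ge> 1"
    and lam_pos: "\<forall>t\<ge>0. lam t > 0"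
    and deriv: "\<forall>t\<ge>0. (x has_vector_derivative x' t) (at t within {0..})"
    and ode: "\<forall>t\<ge>0. x' t + x t - resolvent A (lam t) (x t) = 0"
    and alg: "\<forall>t\<ge>0. lam t * norm (resolvent A (lam t) (x t) - x t) ^ (p - 1) = \<theta>"
    and x0: "x 0 \<in> {y. 0 \<notin> A y}"
    and z: "z \<in> zeros_op A"
  shows "\<forall>t\<ge>0. \<exists>D. ((\<lambda>s. (1/2) * (norm (x s - z))\<^sup>2) has_real_derivative D) (at t within {0..})
             \<and> D \<le> - (norm (x t - resolvent A (lam t) (x t)))\<^sup>2"
proof (intro allI impI)
  fix t :: real assume t: "t \<ge> 0"
  have z0: "0 \<in> A z" using z unfolding zeros_op_def by simp
  have monA: "monotone_op A" using mm unfolding maximal_monotone_def by simp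
  define J where "J = resolvent A (lam t) (x t)"
  obtain u where u: "u \<in> A J" "x t = J + lam t *\<^sub>R u"
    using resolvent_prop[OF mm lam_pos[rule_format, OF t] z0, of "x t"] unfolding J_def by blast
  have x't: "x' t = J - x t" using ode[rule_format, OF t] unfolding J_def by (simp add: algebra_simps)
  define D where "D = inner (x t - z) (x' t)"
  have d1: "((\<lambda>s. x s - z) has_derivative (\<lambda>h. h *\<^sub>R x' t)) (at t within {0..})"
    using deriv[rule_format, OF t] unfolding has_vector_derivative_def
    by (auto intro!: derivative_eq_intros)
  have d2: "((\<lambda>s. (1/2) * inner (x s - z) (x s - z)) has_derivative (*) D) (at t within {0..})"
  proof -
    have d3: "((\<lambda>s. inner (x s - z) (x s - z)) has_derivative
        (\<lambda>h. inner (x t - z) (h *\<^sub>R x' t) + inner (h *\<^sub>R x' t) (x t - z))) (at t within {0..})"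
      by (rule has_derivative_inner[OF d1 d1])
    have d4: "((\<lambda>s. (1/2) * inner (x s - z) (x s - z)) has_derivative
        (\<lambda>h. (1/2) * (inner (x t - z) (h *\<^sub>R x' t) + inner (h *\<^sub>R x' t) (x t - z)))) (at t within {0..})"
      by (rule has_derivative_mult_right[OF d3])
    have e: "(\<lambda>h. (1/2) * (inner (x t - z) (h *\<^sub>R x' t) + inner (h *\<^sub>R x' t) (x t - z))) = (*) D"
      unfolding D_def by (rule ext) (simp add: inner_commute algebra_simps)
    show ?thesis using d4 unfolding e .
  qed
  have "((\<lambda>s. (1/2) * (norm (x s - z))\<^sup>2) has_real_derivative D) (at t within {0..})"
    unfolding has_field_derivative_def power2_norm_eq_inner by (rule d2)
  moreover have "D \<le> - (norm (x t - J))\<^sup>2"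
  proof -
    have mon: "0 \<le> inner (J - z) (u - 0)" using monA u(1) z0 unfolding monotone_op_def by blast
    have "D = inner ((x t - J) + (J - z)) (J - x t)" unfolding D_def x't by simp
    also have "\<dots> = - inner (x t - J) (x t - J) + inner (J - z) (J - x t)"
      by (simp add: inner_add_left inner_diff_right inner_diff_left inner_commute)
    also have "inner (J - z) (J - x t) = - lam t * inner (J - z) u"
      using u(2) by (simp add: inner_diff_right)
    finally show ?thesis using mon lam_pos[rule_format, OF t]
      by (simp add: power2_norm_eq_inner mult_nonneg_nonneg)
  qed
  ultimately show "\<exists>D. ((\<lambda>s. (1/2) * (norm (x s - z))\<^sup>2) has_real_derivative D) (at t within {0..})
             \<and> D \<le> - (norm (x t - resolvent A (lam t) (x t)))\<^sup>2" unfolding J_def by blast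
qed

end
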